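(* Under the hypotheses and notation of the context (PQRS-form with $m\ge1$ and $S$ invertible self-adjoint), the scattering matrix admits, for all sufficiently small $k>0$, the convergent expansion $$\mathcal S(k)=-I^{(n)}+2M_Q\left(I^{(a)}+RR^*+QQ^*\right)^{-1}M_Q^*-2\mathrm ik\,X\left[\sum_{j=0}^\infty(\mathrm ik)^j\left(S^{-1}X^*X\right)^j\right]S^{-1}X^*,$$ and in particular $$\lim_{k\to0^+}\mathcal S(k)=-I^{(n)}+2M_Q\left(I^{(a)}+RR^*+QQ^*\right)^{-1}M_Q^*.$$
   Context: $I^{(j)}$ denotes the $j\times j$ identity matrix. Let $0\le r_A,r_B\le n$ with $m=r_A+r_B-n\ge1$, $a=n-r_A$, $b=n-r_B$, $S\in\mathbb C^{m\times m}$ invertible self-adjoint, $P\in\mathbb C^{m\times b}$, $Q\in\mathbb C^{a\times b}$, $R\in\mathbb C^{a\times m}$. The vertex coupling is given by the PQRS-form $B_{PQRS}\Psi'=A_{PQRS}\Psi$ with (block sizes $m,a,b$) $$B_{PQRS}=\begin{pmatrix} I^{(m)} & 0 & P\\ R & I^{(a)} & Q\\ 0&0&0\end{pmatrix},\qquad A_{PQRS}=\begin{pmatrix} S & -SR^* & 0\\ 0&0&0\\ -P^* & (RP-Q)^* & I^{(b)}\end{pmatrix};$$ its scattering matrix is $\mathcal S(k)=-(A+\mathrm ikB)^{-1}(A-\mathrm ikB)$, $k>0$, with $A=-A_{PQRS}$, $B=B_{PQRS}$. Further, $$M_Q=\begin{pmatrix}R^*\\ I^{(a)}\\ Q^*\end{pmatrix},\quad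 X=\begin{pmatrix}I^{(m)}\\0\\P^*\end{pmatrix}-M_Q\left(I^{(a)}+RR^*+QQ^*\right)^{-1}(R+QP^* ).$$ *)

theory Defs
  imports "HOL-Analysis.Analysis" "Jordan_Normal_Form.Schur_Decomposition"
    "Jordan_Normal_Form.Gauss_Jordan_Elimination"
begin

abbreviation adj :: "complex mat \<Rightarrow> complex mat" where
  "adj A \<equiv> mat_adjoint A"

definition minv :: "complex mat \<Rightarrow> complex mat" where
  "minv A = the (mat_inverse A)"

definition vstack :: "'a::zero mat \<Rightarrow> 'a mat \<Rightarrow> 'a mat" where
  "vstack A B = four_block_mat A (0\<^sub>m (dim_row A) 0) B (0\<^sub>m (dim_row B) 0)"

definition hstack :: "'a::zero mat \<Rightarrow> 'a mat \<Rightarrow> 'a mat" where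
  "hstack A B = four_block_mat A B (0\<^sub>m 0 (dim_col A)) (0\<^sub>m 0 (dim_col B))"

text \<open>Block sizes: m = dim_row S, a = dim_row Q, b = dim_col Q.
  B_PQRS = [[I_m, 0, P], [R, I_a, Q], [0, 0, 0]]\<close>
definition B_PQRS :: "complex mat \<Rightarrow> complex mat \<Rightarrow> complex mat \<Rightarrow> complex mat \<Rightarrow> complex mat" where
  "B_PQRS P Q R S = (let m = dim_row S; a = dim_row Q; b = dim_col Q in
     four_block_mat
       (four_block_mat (1\<^sub>m m) (0\<^sub>m m a) R (1\<^sub>m a))
       (vstack P Q)
       (0\<^sub>m b (m + a))
       (0\<^sub>m b b))"

text \<open>A_PQRS = [[S, -S R^*, 0], [0, 0, 0], [-P^*, (RP-Q)^*, I_b]]\<close>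
definition A_PQRS :: "complex mat \<Rightarrow> complex mat \<Rightarrow> complex mat \<Rightarrow> complex mat \<Rightarrow> complex mat" where
  "A_PQRS P Q R S = (let m = dim_row S; a = dim_row Q; b = dim_col Q in
     four_block_mat
       (four_block_mat S (- (S * adj R)) (0\<^sub>m a m) (0\<^sub>m a a))
       (0\<^sub>m (m + a) b)
       (hstack (- adj P) (adj (R * P - Q)))
       (1\<^sub>m b))"

definition scat :: "complex mat \<Rightarrow> complex mat \<Rightarrow> complex mat \<Rightarrow> complex mat \<Rightarrow> real \<Rightarrow> complex mat" where
  "scat P Q R S k = (let A = - A_PQRS P Q R S; B = B_PQRS P Q R S in
     - (minv (A + (\<i> * complex_of_real k) \<cdot>\<^sub>m B) * (A - (\<i> * complex_of_real k) \<cdot>\<^sub>m B)))"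

definition M_Q :: "complex mat \<Rightarrow> complex mat \<Rightarrow> complex mat" where
  "M_Q Q R = vstack (adj R) (vstack (1\<^sub>m (dim_row Q)) (adj Q))"

definition G_QR :: "complex mat \<Rightarrow> complex mat \<Rightarrow> complex mat" where
  "G_QR Q R = minv (1\<^sub>m (dim_row Q) + R * adj R + Q * adj Q)"

definition Xmat :: "complex mat \<Rightarrow> complex mat \<Rightarrow> complex mat \<Rightarrow> complex mat \<Rightarrow> complex mat" where
  "Xmat P Q R S = vstack (1\<^sub>m (dim_row S)) (vstack (0\<^sub>m (dim_row Q) (dim_row S)) (adj P))
                  - M_Q Q R * G_QR Q R * (R + Q * adj P)"

end

theory Submission
  imports Defs
begin

lemma four_block_trivial: "dim_row D = 0 \<Longrightarrow> dim_col D = 0 \<Longrightarrow> four_block_mat A B C D = A"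
  by (rule eq_matI) auto

lemma vstack_carrier[simp]: "A \<in> carrier_mat r1 c \<Longrightarrow> B \<in> carrier_mat r2 c \<Longrightarrow> vstack A B \<in> carrier_mat (r1+r2) c"
  unfolding vstack_def by auto
lemma hstack_carrier[simp]: "A \<in> carrier_mat r c1 \<Longrightarrow> B \<in> carrier_mat r c2 \<Longrightarrow> hstack A B \<in> carrier_mat r (c1+c2)"
  unfolding hstack_def by auto

lemma hstack_vstack_mult:
  assumes "A \<in> carrier_mat r c1" "B \<in> carrier_mat r c2" "C \<in> carrier_mat c1 s" "D \<in> carrier_mat c2 s"
  shows "hstack A B * vstack C D = A * C + B * D"
proof -
  have d: "dim_col A = c1" "dim_col B = c2" "dim_row C = c1" "dim_row D = c2" using assms by auto
  have "hstack A B * vstack C D = four_block_mat A B (0\<^sub>m 0 c1) (0\<^sub>m 0 c2) * four_block_mat C (0\<^sub>m c1 0) D (0\<^sub>m c2 0)"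
    unfolding hstack_def vstack_def d ..
  also have "\<dots> = four_block_mat (A * C + B * D) (A * 0\<^sub>m c1 0 + B * 0\<^sub>m c2 0)
    (0\<^sub>m 0 c1 * C + 0\<^sub>m 0 c2 * D) (0\<^sub>m 0 c1 * 0\<^sub>m c1 0 + 0\<^sub>m 0 c2 * 0\<^sub>m c2 0)"
    by (rule mult_four_block_mat) (use assms in auto)
  also have "\<dots> = A * C + B * D" by (rule four_block_trivial) auto
  finally show ?thesis .
qed

lemma vstack_mult:
  assumes "A \<in> carrier_mat r1 c" "B \<in> carrier_mat r2 c" "C \<in> carrier_mat c s"
  shows "vstack A B * C = vstack (A * C) (B * C)"
proof -
  have "vstack A B * C = four_block_mat A (0\<^sub>m r1 0) B (0\<^sub>m r2 0) * four_block_mat C (0\<^sub>m c 0) (0\<^sub>m 0 s) (0\<^sub>m 0 0)"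
    using assms by (simp add: vstack_def four_block_trivial)
  also have "\<dots> = four_block_mat (A * C + 0\<^sub>m r1 0 * 0\<^sub>m 0 s) (A * 0\<^sub>m c 0 + 0\<^sub>m r1 0 * 0\<^sub>m 0 0)
    (B * C + 0\<^sub>m r2 0 * 0\<^sub>m 0 s) (B * 0\<^sub>m c 0 + 0\<^sub>m r2 0 * 0\<^sub>m 0 0)"
    using assms by (intro mult_four_block_mat) auto
  also have "\<dots> = vstack (A * C) (B * C)" unfolding vstack_def using assms
    by (intro eq_matI) auto
  finally show ?thesis .
qed

lemma hstack_mult:
  assumes "A \<in> carrier_mat r c" "B \<in> carrier_mat c s1" "C \<in> carrier_mat c s2"
  shows "A * hstack B C = hstack (A * B) (A * C)"
proof -
  have "A * hstack B C = four_block_mat A (0\<^sub>m r 0) (0\<^sub>m 0 c) (0\<^sub>m 0 0) * four_block_mat B C (0\<^sub>m 0 s1) (0\<^sub>m 0 s2)"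
    using assms by (simp add: hstack_def four_block_trivial)
  also have "\<dots> = four_block_mat (A * B + 0\<^sub>m r 0 * 0\<^sub>m 0 s1) (A * C + 0\<^sub>m r 0 * 0\<^sub>m 0 s2)
    (0\<^sub>m 0 c * B + 0\<^sub>m 0 0 * 0\<^sub>m 0 s1) (0\<^sub>m 0 c * C + 0\<^sub>m 0 0 * 0\<^sub>m 0 s2)"
    using assms by (intro mult_four_block_mat) auto
  also have "\<dots> = hstack (A * B) (A * C)" unfolding hstack_def using assms
    by (intro eq_matI) auto
  finally show ?thesis .
qed

lemma vstack_add:
  assumes "A \<in> carrier_mat r1 c" "B \<in> carrier_mat r2 c" "C \<in> carrier_mat r1 c" "D \<in> carrier_mat r2 c"
  shows "vstack A B + vstack C D = vstack (A + C) (B + D)"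
  unfolding vstack_def using assms by (intro eq_matI) auto
lemma vstack_minus:
  assumes "A \<in> carrier_mat r1 c" "B \<in> carrier_mat r2 c" "C \<in> carrier_mat r1 c" "D \<in> carrier_mat r2 c"
  shows "vstack A B - vstack C D = vstack (A - C) (B - D)"
  unfolding vstack_def using assms by (intro eq_matI) auto
lemma vstack_uminus:
  assumes "A \<in> carrier_mat r1 c" "B \<in> carrier_mat r2 c"
  shows "- vstack A B = vstack (- A) (- B)"
  unfolding vstack_def using assms by (intro eq_matI) auto
lemma vstack_smult:
  assumes "A \<in> carrier_mat r1 c" "B \<in> carrier_mat r2 c"
  shows "x \<cdot>\<^sub>m vstack A B = vstack (x \<cdot>\<^sub>m A) (x \<cdot>\<^sub>m B)"
  unfolding vstack_def using assms by (intro eq_matI) auto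
lemma vstack_zero: "vstack (0\<^sub>m r1 c) (0\<^sub>m r2 c) = 0\<^sub>m (r1+r2) c"
  unfolding vstack_def by (intro eq_matI) auto

lemma adj_carrier[simp]: "A \<in> carrier_mat r c \<Longrightarrow> adj A \<in> carrier_mat c r"
  unfolding mat_adjoint_def by auto
lemma adj_dims[simp]: "dim_row (adj A) = dim_col A" "dim_col (adj A) = dim_row A"
  unfolding mat_adjoint_def by auto
lemma adj_index[simp]: "i < dim_col A \<Longrightarrow> j < dim_row A \<Longrightarrow> adj A $$ (i,j) = cnj (A $$ (j,i))"
  unfolding mat_adjoint_def by (auto simp: mat_of_rows_index)

lemma adj_adj[simp]: "adj (adj A) = A" by (intro eq_matI) auto
lemma adj_add: "A \<in> carrier_mat r c \<Longrightarrow> B \<in> carrier_mat r c \<Longrightarrow> adj (A + B) = adj A + adj B"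
  by (intro eq_matI) auto
lemma adj_minus: "A \<in> carrier_mat r c \<Longrightarrow> B \<in> carrier_mat r c \<Longrightarrow> adj (A - B) = adj A - adj B"
  by (intro eq_matI) auto
lemma adj_uminus: "adj (- A) = - adj A"
  by (intro eq_matI) auto
lemma adj_one[simp]: "adj (1\<^sub>m n) = 1\<^sub>m n"
  by (intro eq_matI) auto
lemma adj_zero[simp]: "adj (0\<^sub>m r c) = 0\<^sub>m c r"
  by (intro eq_matI) auto
lemma adj_mult: "A \<in> carrier_mat r c \<Longrightarrow> B \<in> carrier_mat c s \<Longrightarrow> adj (A * B) = adj B * adj A"
  apply (intro eq_matI)
    apply (auto simp: scalar_prod_def)
   apply (rule sum.cong, simp, simp add: mult.commute)
  done
lemma adj_vstack: "A \<in> carrier_mat r1 c \<Longrightarrow> B \<in> carrier_mat r2 c \<Longrightarrow> adj (vstack A B) = hstack (adj A) (adj B)"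
  unfolding vstack_def hstack_def by (intro eq_matI) auto
lemma adj_hstack: "A \<in> carrier_mat r c1 \<Longrightarrow> B \<in> carrier_mat r c2 \<Longrightarrow> adj (hstack A B) = vstack (adj A) (adj B)"
  unfolding vstack_def hstack_def by (intro eq_matI) auto

definition vstack3 :: "complex mat \<Rightarrow> complex mat \<Rightarrow> complex mat \<Rightarrow> complex mat" where
  "vstack3 x y z = vstack x (vstack y z)"
definition hstack3 :: "complex mat \<Rightarrow> complex mat \<Rightarrow> complex mat \<Rightarrow> complex mat" where
  "hstack3 x y z = hstack x (hstack y z)"

lemma B_block:
  assumes "P \<in> carrier_mat m b" "Q \<in> carrier_mat a b" "R \<in> carrier_mat a m" "S \<in> carrier_mat m m"
  shows "B_PQRS P Q R S = vstack3 (hstack3 (1\<^sub>m m) (0\<^sub>m m a) P) (hstack3 R (1\<^sub>m a) Q) (0\<^sub>m b (m+a+b))"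
  unfolding B_PQRS_def vstack3_def hstack3_def vstack_def hstack_def Let_def using assms
  by (intro eq_matI) auto

lemma A_block:
  assumes "P \<in> carrier_mat m b" "Q \<in> carrier_mat a b" "R \<in> carrier_mat a m" "S \<in> carrier_mat m m"
  shows "A_PQRS P Q R S = vstack3 (hstack3 S (- (S * adj R)) (0\<^sub>m m b)) (0\<^sub>m a (m+a+b))
     (hstack3 (- adj P) (adj (R * P - Q)) (1\<^sub>m b))"
  unfolding A_PQRS_def vstack3_def hstack3_def vstack_def hstack_def Let_def using assms
  by (intro eq_matI) auto

lemma one_block: "1\<^sub>m (m+a+b) = vstack3 (hstack3 (1\<^sub>m m) (0\<^sub>m m a) (0\<^sub>m m b))
   (hstack3 (0\<^sub>m a m) (1\<^sub>m a) (0\<^sub>m a b)) (hstack3 (0\<^sub>m b m) (0\<^sub>m b a) (1\<^sub>m b))"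
  unfolding vstack3_def hstack3_def vstack_def hstack_def
  by (intro eq_matI) auto

lemma vstack3_carrier[simp]: "A \<in> carrier_mat r1 c \<Longrightarrow> B \<in> carrier_mat r2 c \<Longrightarrow> C \<in> carrier_mat r3 c \<Longrightarrow>
  vstack3 A B C \<in> carrier_mat (r1+r2+r3) c"
  unfolding vstack3_def using vstack_carrier by (metis add.assoc)
lemma hstack3_carrier[simp]: "A \<in> carrier_mat r c1 \<Longrightarrow> B \<in> carrier_mat r c2 \<Longrightarrow> C \<in> carrier_mat r c3 \<Longrightarrow>
  hstack3 A B C \<in> carrier_mat r (c1+c2+c3)"
  unfolding hstack3_def using hstack_carrier by (metis add.assoc)

lemma hv3_mult:
  assumes "A1 \<in> carrier_mat r c1" "A2 \<in> carrier_mat r c2" "A3 \<in> carrier_mat r c3"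
    "B1 \<in> carrier_mat c1 s" "B2 \<in> carrier_mat c2 s" "B3 \<in> carrier_mat c3 s"
  shows "hstack3 A1 A2 A3 * vstack3 B1 B2 B3 = A1 * B1 + (A2 * B2 + A3 * B3)"
  unfolding hstack3_def vstack3_def using assms
  by (simp add: hstack_vstack_mult[of _ r c1 _ "c2+c3" _ s] hstack_vstack_mult[of _ r c2 _ c3 _ s])

lemma v3_mult:
  assumes "A1 \<in> carrier_mat r1 c" "A2 \<in> carrier_mat r2 c" "A3 \<in> carrier_mat r3 c" "Z \<in> carrier_mat c s"
  shows "vstack3 A1 A2 A3 * Z = vstack3 (A1 * Z) (A2 * Z) (A3 * Z)"
  unfolding vstack3_def using assms
  by (simp add: vstack_mult[of _ r1 c _ "r2+r3" Z s] vstack_mult[of _ r2 c _ r3 Z s])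

lemma h3_mult:
  assumes "A1 \<in> carrier_mat c s1" "A2 \<in> carrier_mat c s2" "A3 \<in> carrier_mat c s3" "Z \<in> carrier_mat r c"
  shows "Z * hstack3 A1 A2 A3 = hstack3 (Z * A1) (Z * A2) (Z * A3)"
  unfolding hstack3_def using assms
  by (simp add: hstack_mult[of Z r c _ s1 _ "s2+s3"] hstack_mult[of Z r c _ s2 _ s3])

lemma v3_add:
  assumes "A1 \<in> carrier_mat r1 c" "A2 \<in> carrier_mat r2 c" "A3 \<in> carrier_mat r3 c"
   "B1 \<in> carrier_mat r1 c" "B2 \<in> carrier_mat r2 c" "B3 \<in> carrier_mat r3 c"
  shows "vstack3 A1 A2 A3 + vstack3 B1 B2 B3 = vstack3 (A1 + B1) (A2 + B2) (A3 + B3)"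
  unfolding vstack3_def using assms
  by (simp add: vstack_add[of _ r1 c _ "r2+r3"] vstack_add[of _ r2 c _ r3])

lemma v3_smult:
  assumes "A1 \<in> carrier_mat r1 c" "A2 \<in> carrier_mat r2 c" "A3 \<in> carrier_mat r3 c"
  shows "x \<cdot>\<^sub>m vstack3 A1 A2 A3 = vstack3 (x \<cdot>\<^sub>m A1) (x \<cdot>\<^sub>m A2) (x \<cdot>\<^sub>m A3)"
  unfolding vstack3_def using assms
  by (simp add: vstack_smult[of _ r1 c _ "r2+r3"] vstack_smult[of _ r2 c _ r3])

lemma v3_uminus:
  assumes "A1 \<in> carrier_mat r1 c" "A2 \<in> carrier_mat r2 c" "A3 \<in> carrier_mat r3 c"
  shows "- vstack3 A1 A2 A3 = vstack3 (- A1) (- A2) (- A3)"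
  unfolding vstack3_def using assms
  by (simp add: vstack_uminus[of _ r1 c _ "r2+r3"] vstack_uminus[of _ r2 c _ r3])

lemma adj_v3: "A1 \<in> carrier_mat r1 c \<Longrightarrow> A2 \<in> carrier_mat r2 c \<Longrightarrow> A3 \<in> carrier_mat r3 c \<Longrightarrow>
  adj (vstack3 A1 A2 A3) = hstack3 (adj A1) (adj A2) (adj A3)"
  unfolding vstack3_def hstack3_def by (simp add: adj_vstack[of _ r1 c _ "r2+r3"] adj_vstack[of _ r2 c _ r3])

lemma one_block2: "hstack3 (vstack3 (1\<^sub>m m) (0\<^sub>m a m) (0\<^sub>m b m)) (vstack3 (0\<^sub>m m a) (1\<^sub>m a) (0\<^sub>m b a))
   (vstack3 (0\<^sub>m m b) (0\<^sub>m a b) (1\<^sub>m b)) = 1\<^sub>m (m+a+b)"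
  unfolding vstack3_def hstack3_def vstack_def hstack_def
  by (intro eq_matI) auto

lemma vstack_dims[simp]: "dim_row (vstack A B) = dim_row A + dim_row B" "dim_col (vstack A B) = dim_col A"
  unfolding vstack_def by auto
lemma hstack_dims[simp]: "dim_row (hstack A B) = dim_row A" "dim_col (hstack A B) = dim_col A + dim_col B"
  unfolding hstack_def by auto
lemma vstack3_dims[simp]: "dim_row (vstack3 A B C) = dim_row A + dim_row B + dim_row C" "dim_col (vstack3 A B C) = dim_col A"
  unfolding vstack3_def by auto
lemma hstack3_dims[simp]: "dim_row (hstack3 A B C) = dim_row A" "dim_col (hstack3 A B C) = dim_col A + dim_col B + dim_col C"
  unfolding hstack3_def by auto

named_theorems md
lemma assoc_d[md]: assumes h1: "dim_col A = dim_row B" and h2: "dim_col B = dim_row C" shows "A * B * C = A * (B * C)"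
  using assoc_mult_mat[OF carrier_matI[OF refl h1] carrier_matI[OF refl h2] carrier_matI[OF refl refl]] .
lemma distL_d[md]: assumes h1: "dim_col A = dim_row B" and h2: "dim_row B = dim_row C" and h3: "dim_col B = dim_col C"
  shows "(A::'a::semiring_0 mat) * (B + C) = A * B + A * C"
  using mult_add_distrib_mat[OF carrier_matI[OF refl h1] carrier_matI[OF refl refl] carrier_matI[OF h2[symmetric] h3[symmetric]]] .
lemma distR_d[md]: assumes h1: "dim_row A = dim_row B" and h2: "dim_col A = dim_col B" and h3: "dim_col A = dim_row C"
  shows "((A::'a::semiring_0 mat) + B) * C = A * C + B * C"
  using add_mult_distrib_mat[OF carrier_matI[OF refl h3] carrier_matI[OF h1[symmetric] trans[OF h2[symmetric] h3]] carrier_matI[OF refl refl]] .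
lemma distLm_d[md]: assumes h1: "dim_col A = dim_row B" and h2: "dim_row B = dim_row C" and h3: "dim_col B = dim_col C"
  shows "(A::'a::ring mat) * (B - C) = A * B - A * C"
  using mult_minus_distrib_mat[OF carrier_matI[OF refl h1] carrier_matI[OF refl refl] carrier_matI[OF h2[symmetric] h3[symmetric]]] .
lemma distRm_d[md]: assumes h1: "dim_row A = dim_row B" and h2: "dim_col A = dim_col B" and h3: "dim_col A = dim_row C"
  shows "((A::'a::ring mat) - B) * C = A * C - B * C"
  using minus_mult_distrib_mat[OF carrier_matI[OF refl h3] carrier_matI[OF h1[symmetric] trans[OF h2[symmetric] h3]] carrier_matI[OF refl refl]] .
lemma smultL_d[md]: assumes h1: "dim_col A = dim_row B" shows "(k \<cdot>\<^sub>m A) * B = (k :: 'a :: comm_semiring_0) \<cdot>\<^sub>m (A * B)"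
  using mult_smult_assoc_mat[OF carrier_matI[OF refl h1] carrier_matI[OF refl refl]] .
lemma smultR_d[md]: assumes h1: "dim_col A = dim_row B" shows "A * (k \<cdot>\<^sub>m B) = (k :: 'a :: comm_semiring_0) \<cdot>\<^sub>m (A * B)"
  using mult_smult_distrib[OF carrier_matI[OF refl h1] carrier_matI[OF refl refl]] .
lemma smult_smult_d[md]: "k \<cdot>\<^sub>m (l \<cdot>\<^sub>m A) = (k * l :: 'a::semigroup_mult) \<cdot>\<^sub>m A"
  by (rule eq_matI) (auto simp: mult.assoc)

definition nu :: "complex mat \<Rightarrow> real" where
  "nu A = (\<Sum>i<dim_row A. \<Sum>l<dim_col A. norm (A $$ (i,l)))"

lemma nu_nonneg: "0 \<le> nu A" unfolding nu_def by (intro sum_nonneg) auto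

lemma nu_entry: assumes "i < dim_row A" "l < dim_col A" shows "norm (A $$ (i,l)) \<le> nu A"
proof -
  have "norm (A $$ (i,l)) \<le> (\<Sum>l<dim_col A. norm (A $$ (i,l)))"
    by (rule member_le_sum) (use assms in auto)
  also have "\<dots> \<le> nu A" unfolding nu_def
    by (rule member_le_sum[where f="\<lambda>i. \<Sum>l<dim_col A. norm (A $$ (i,l))"]) (use assms in \<open>auto intro: sum_nonneg\<close>)
  finally show ?thesis .
qed

lemma mult_index_sum: "i < dim_row A \<Longrightarrow> l < dim_col B \<Longrightarrow> dim_col A = dim_row B \<Longrightarrow>
  (A * B) $$ (i,l) = (\<Sum>t<dim_row B. A $$ (i,t) * B $$ (t,l))"
  by (simp add: scalar_prod_def lessThan_atLeast0)

lemma nu_mult: assumes d: "dim_col A = dim_row B" shows "nu (A * B) \<le> nu A * nu B"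
proof -
  have "nu (A * B) = (\<Sum>i<dim_row A. \<Sum>l<dim_col B. norm (\<Sum>t<dim_row B. A $$ (i,t) * B $$ (t,l)))"
    unfolding nu_def using d by (auto simp del: index_mult_mat(1) simp: mult_index_sum intro!: sum.cong)
  also have "\<dots> \<le> (\<Sum>i<dim_row A. \<Sum>l<dim_col B. \<Sum>t<dim_row B. norm (A $$ (i,t)) * norm (B $$ (t,l)))"
    by (intro sum_mono) (simp add: norm_mult[symmetric] norm_sum)
  also have "\<dots> = (\<Sum>i<dim_row A. \<Sum>t<dim_row B. norm (A $$ (i,t)) * (\<Sum>l<dim_col B. norm (B $$ (t,l))))"
    by (simp add: sum_distrib_left sum.swap[where A="{..<dim_col B}"])
  also have "\<dots> \<le> (\<Sum>i<dim_row A. \<Sum>t<dim_row B. norm (A $$ (i,t)) * nu B)"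
  proof (intro sum_mono mult_left_mono)
    fix t assume t: "t \<in> {..<dim_row B}"
    show "(\<Sum>l<dim_col B. norm (B $$ (t,l))) \<le> nu B" unfolding nu_def
      by (rule member_le_sum[where f="\<lambda>i. \<Sum>l<dim_col B. norm (B $$ (i,l))"]) (use t in \<open>auto intro: sum_nonneg\<close>)
  qed auto
  also have "\<dots> = nu A * nu B" unfolding nu_def using d by (simp add: sum_distrib_right)
  finally show ?thesis .
qed

lemma nu_one: "nu (1\<^sub>m k) = k"
proof -
  have "nu (1\<^sub>m k) = (\<Sum>i<k. \<Sum>l<k. if i = l then 1 else 0)"
    unfolding nu_def by (intro sum.cong refl) auto
  also have "\<dots> = k" by simp
  finally show ?thesis .
qed

lemma nu_pow: assumes T: "T \<in> carrier_mat k k" shows "nu (T ^\<^sub>m j) \<le> k * nu T ^ j"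
proof (induct j)
  case 0 thus ?case using T by (simp add: nu_one)
next
  case (Suc j)
  have "nu (T ^\<^sub>m Suc j) \<le> nu (T ^\<^sub>m j) * nu T" using T by (simp add: nu_mult)
  also have "\<dots> \<le> k * nu T ^ j * nu T" by (rule mult_right_mono[OF Suc nu_nonneg])
  finally show ?case by (simp add: mult_ac)
qed


lemma geo_half: "summable (\<lambda>j. (c::real) * (1/2) ^ j)" "(\<Sum>j. (c::real) * (1/2) ^ j) = 2 * c"
  using summable_mult[OF summable_geometric[of "1/2::real"]] suminf_mult[OF summable_geometric[of "1/2::real"]]
    suminf_geometric[of "1/2::real"] by auto

context
  fixes T :: "complex mat" and q :: nat and z :: complex
  assumes T: "T \<in> carrier_mat q q" and hz: "norm z * nu T \<le> 1/2"
begin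

definition "fs j = (z ^ j) \<cdot>\<^sub>m (T ^\<^sub>m j)"
definition "Wm = mat q q (\<lambda>(i,l). \<Sum>j. fs j $$ (i,l))"

lemma dT[simp]: "dim_row T = q" "dim_col T = q" using T by auto
lemma dfs[simp]: "dim_row (fs j) = q" "dim_col (fs j) = q" unfolding fs_def by auto
lemma dW[simp]: "dim_row Wm = q" "dim_col Wm = q" unfolding Wm_def by auto

lemma fs_bound: assumes "i < q" "l < q" shows "norm (fs j $$ (i,l)) \<le> q * (1/2) ^ j"
proof -
  have "norm (fs j $$ (i,l)) = norm z ^ j * norm ((T ^\<^sub>m j) $$ (i,l))"
    unfolding fs_def using assms by (simp add: norm_mult norm_power)
  also have "\<dots> \<le> norm z ^ j * nu (T ^\<^sub>m j)"
    by (intro mult_left_mono nu_entry) (use assms in auto)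
  also have "\<dots> \<le> norm z ^ j * (q * nu T ^ j)"
    by (intro mult_left_mono nu_pow[OF T]) auto
  also have "\<dots> = q * (norm z * nu T) ^ j" by (simp add: power_mult_distrib)
  also have "\<dots> \<le> q * (1/2) ^ j"
    by (intro mult_left_mono power_mono hz) (auto intro: mult_nonneg_nonneg nu_nonneg)
  finally show ?thesis .
qed

lemma fs_summable: assumes "i < q" "l < q" shows "summable (\<lambda>j. fs j $$ (i,l))"
  by (rule summable_norm_cancel, rule summable_comparison_test'[OF geo_half(1)[of q]])
     (use fs_bound[OF assms] in auto)

lemma W_bound: assumes "i < q" "l < q" shows "norm (Wm $$ (i,l)) \<le> 2 * q"
proof -
  have sn: "summable (\<lambda>j. norm (fs j $$ (i,l)))"
    by (rule summable_comparison_test'[OF geo_half(1)[of q]]) (use fs_bound[OF assms] in auto)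
  have "norm (Wm $$ (i,l)) = norm (\<Sum>j. fs j $$ (i,l))" unfolding Wm_def using assms by simp
  also have "\<dots> \<le> (\<Sum>j. norm (fs j $$ (i,l)))" by (rule summable_norm[OF sn])
  also have "\<dots> \<le> (\<Sum>j. q * (1/2::real) ^ j)"
    by (rule suminf_le[OF _ sn geo_half(1)]) (use fs_bound[OF assms] in auto)
  also have "\<dots> = 2 * q" using geo_half(2) by simp
  finally show ?thesis .
qed

lemma fs_step: "fs j * (1\<^sub>m q - z \<cdot>\<^sub>m T) = fs j - fs (Suc j)"
  unfolding fs_def by (simp add: md)

lemma WC: "Wm * (1\<^sub>m q - z \<cdot>\<^sub>m T) = 1\<^sub>m q"
proof (rule eq_matI)
  fix i l assume i: "i < dim_row (1\<^sub>m q)" and l: "l < dim_col (1\<^sub>m q)"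
  hence i: "i < q" and l: "l < q" by auto
  let ?C = "1\<^sub>m q - z \<cdot>\<^sub>m T"
  have "(Wm * ?C) $$ (i,l) = (\<Sum>t<q. Wm $$ (i,t) * ?C $$ (t,l))"
    using i l by (subst mult_index_sum) auto
  also have "\<dots> = (\<Sum>t<q. \<Sum>j. fs j $$ (i,t) * ?C $$ (t,l))"
    using i by (intro sum.cong refl) (simp add: Wm_def suminf_mult2[OF fs_summable])
  also have "\<dots> = (\<Sum>j. \<Sum>t<q. fs j $$ (i,t) * ?C $$ (t,l))"
    by (rule suminf_sum[symmetric]) (use i in \<open>auto intro!: summable_mult2 fs_summable\<close>)
  also have "\<dots> = (\<Sum>j. (fs j * ?C) $$ (i,l))"
    using i l by (intro suminf_cong) (subst mult_index_sum, auto)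
  also have "\<dots> = (\<Sum>j. fs j $$ (i,l) - fs (Suc j) $$ (i,l))"
    unfolding fs_step using i l by simp
  also have "\<dots> = fs 0 $$ (i,l) - 0"
  proof (rule sums_unique[symmetric], rule telescope_sums')
    show "(\<lambda>j. fs j $$ (i,l)) \<longlonglongrightarrow> 0"
    proof (rule Lim_null_comparison)
      show "\<forall>\<^sub>F j in sequentially. norm (fs j $$ (i,l)) \<le> q * (1/2) ^ j"
        using fs_bound[OF i l] by auto
      show "(\<lambda>j. real q * (1/2) ^ j) \<longlonglongrightarrow> 0"
        by (intro tendsto_mult_right_zero LIMSEQ_power_zero) auto
    qed
  qed
  also have "\<dots> = 1\<^sub>m q $$ (i,l)" unfolding fs_def using i l by simp
  finally show "(Wm * ?C) $$ (i,l) = 1\<^sub>m q $$ (i,l)" .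
qed auto

lemma CW: "(1\<^sub>m q - z \<cdot>\<^sub>m T) * Wm = 1\<^sub>m q"
  by (rule mat_mult_left_right_inverse[OF _ _ WC]) (auto intro!: carrier_matI)

end

lemma minv_props_det: assumes A: "(A::complex mat) \<in> carrier_mat k k" and dA: "det A \<noteq> 0"
  shows "minv A \<in> carrier_mat k k" "A * minv A = 1\<^sub>m k" "minv A * A = 1\<^sub>m k"
proof -
  from det_non_zero_imp_unit[OF A dA, of undefined]
  have U: "A \<in> Units (ring_mat TYPE(complex) k undefined)" .
  have "mat_inverse A \<noteq> None" using mat_inverse(1)[OF A, of undefined] U by auto
  then obtain C where C: "mat_inverse A = Some C" by auto
  from mat_inverse(2)[OF A C] have "A * C = 1\<^sub>m k \<and> C * A = 1\<^sub>m k \<and> C \<in> carrier_mat k k" .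
  thus "minv A \<in> carrier_mat k k" "A * minv A = 1\<^sub>m k" "minv A * A = 1\<^sub>m k"
    unfolding minv_def C by auto
qed

lemma minv_props: assumes A: "(A::complex mat) \<in> carrier_mat k k" and B: "B \<in> carrier_mat k k" and AB: "A * B = 1\<^sub>m k"
  shows "minv A \<in> carrier_mat k k" "A * minv A = 1\<^sub>m k" "minv A * A = 1\<^sub>m k"
proof -
  have "det A * det B = 1" using det_mult[OF A B] AB by simp
  hence "det A \<noteq> 0" by auto
  from minv_props_det[OF A this]
  show "minv A \<in> carrier_mat k k" "A * minv A = 1\<^sub>m k" "minv A * A = 1\<^sub>m k" by auto
qed

lemma quad_form: assumes C: "C \<in> carrier_mat r c"
  shows "(\<Sum>i<r. cnj (v i) * (\<Sum>t<r. (C * adj C) $$ (i,t) * v t))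
     = of_real (\<Sum>p<c. (cmod (\<Sum>t<r. cnj (C $$ (t,p)) * v t))^2)"
proof -
  have e: "(C * adj C) $$ (i,t) = (\<Sum>p<c. C $$ (i,p) * cnj (C $$ (t,p)))" if "i < r" "t < r" for i t
    using C that by (simp del: index_mult_mat(1) add: mult_index_sum)
  have "(\<Sum>i<r. cnj (v i) * (\<Sum>t<r. (C * adj C) $$ (i,t) * v t))
     = (\<Sum>i<r. \<Sum>t<r. \<Sum>p<c. (cnj (v i) * C $$ (i,p)) * (cnj (C $$ (t,p)) * v t))"
  proof (rule sum.cong[OF refl])
    fix i assume i: "i \<in> {..<r}"
    have "cnj (v i) * (\<Sum>t<r. (C * adj C) $$ (i,t) * v t) = (\<Sum>t<r. cnj (v i) * ((C * adj C) $$ (i,t) * v t))"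
      by (rule sum_distrib_left)
    also have "\<dots> = (\<Sum>t<r. \<Sum>p<c. (cnj (v i) * C $$ (i,p)) * (cnj (C $$ (t,p)) * v t))"
    proof (rule sum.cong[OF refl])
      fix t assume t: "t \<in> {..<r}"
      show "cnj (v i) * ((C * adj C) $$ (i,t) * v t) = (\<Sum>p<c. (cnj (v i) * C $$ (i,p)) * (cnj (C $$ (t,p)) * v t))"
        using i t by (simp add: e sum_distrib_left sum_distrib_right algebra_simps)
    qed
    finally show "cnj (v i) * (\<Sum>t<r. (C * adj C) $$ (i,t) * v t) = (\<Sum>t<r. \<Sum>p<c. (cnj (v i) * C $$ (i,p)) * (cnj (C $$ (t,p)) * v t))" .
  qed
  also have "\<dots> = (\<Sum>i<r. \<Sum>p<c. \<Sum>t<r. (cnj (v i) * C $$ (i,p)) * (cnj (C $$ (t,p)) * v t))"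
    by (rule sum.cong[OF refl], rule sum.swap)
  also have "\<dots> = (\<Sum>p<c. \<Sum>i<r. \<Sum>t<r. (cnj (v i) * C $$ (i,p)) * (cnj (C $$ (t,p)) * v t))"
    by (rule sum.swap)
  also have "\<dots> = (\<Sum>p<c. (\<Sum>i<r. cnj (v i) * C $$ (i,p)) * (\<Sum>t<r. cnj (C $$ (t,p)) * v t))"
    by (simp only: sum_product)
  also have "\<dots> = (\<Sum>p<c. cnj (\<Sum>t<r. cnj (C $$ (t,p)) * v t) * (\<Sum>t<r. cnj (C $$ (t,p)) * v t))"
    by (simp add: mult.commute)
  also have "\<dots> = (\<Sum>p<c. of_real ((cmod (\<Sum>t<r. cnj (C $$ (t,p)) * v t))^2))"
    by (rule sum.cong[OF refl], subst complex_norm_square, rule mult.commute)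
  also have "\<dots> = of_real (\<Sum>p<c. (cmod (\<Sum>t<r. cnj (C $$ (t,p)) * v t))^2)"
    by (rule of_real_sum[symmetric])
  finally show ?thesis .
qed

lemma minus_self_d[md]: "(A::'a::ab_group_add mat) - A = 0\<^sub>m (dim_row A) (dim_col A)"
  by (rule eq_matI) auto


lemma adj_add_d[md]: assumes "dim_row A = dim_row B" "dim_col A = dim_col B" shows "adj (A + B) = adj A + adj B"
  using adj_add[OF carrier_matI[OF refl refl] carrier_matI[OF assms[symmetric]]] .
lemma adj_minus_d[md]: assumes "dim_row A = dim_row B" "dim_col A = dim_col B" shows "adj (A - B) = adj A - adj B"
  using adj_minus[OF carrier_matI[OF refl refl] carrier_matI[OF assms[symmetric]]] .
lemma adj_mult_d[md]: assumes "dim_col A = dim_row B" shows "adj (A * B) = adj B * adj A"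
  using adj_mult[OF carrier_matI[OF refl assms] carrier_matI[OF refl refl]] .
lemma adj_smult[md]: "adj (k \<cdot>\<^sub>m A) = cnj k \<cdot>\<^sub>m adj A"
  by (rule eq_matI) auto
declare adj_uminus[md]


lemma minus_zero_d[md]: "dim_row A = r \<Longrightarrow> dim_col A = c \<Longrightarrow> (A::'a::group_add mat) - 0\<^sub>m r c = A"
  by (rule eq_matI) auto
lemma zero_minus_d[md]: "dim_row A = r \<Longrightarrow> dim_col A = c \<Longrightarrow> 0\<^sub>m r c - (A::'a::group_add mat) = - A"
  by (rule eq_matI) auto
lemma plus_zero_d[md]: "dim_row A = r \<Longrightarrow> dim_col A = c \<Longrightarrow> (A::'a::monoid_add mat) + 0\<^sub>m r c = A"
  by (rule eq_matI) auto
lemma zero_plus_d[md]: "dim_row A = r \<Longrightarrow> dim_col A = c \<Longrightarrow> 0\<^sub>m r c + (A::'a::monoid_add mat) = A"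
  by (rule eq_matI) auto
lemma uminus_zero_d[md]: "- 0\<^sub>m r c = (0\<^sub>m r c :: 'a::group_add mat)"
  by (rule eq_matI) auto


lemma v3_mult_d[md]: assumes "dim_col A1 = dim_row Z" "dim_col A2 = dim_col A1" "dim_col A3 = dim_col A1"
  shows "vstack3 A1 A2 A3 * Z = vstack3 (A1 * Z) (A2 * Z) (A3 * Z)"
  by (rule v3_mult[of _ "dim_row A1" "dim_col A1" _ "dim_row A2" _ "dim_row A3" _ "dim_col Z"];
      rule carrier_matI; simp add: assms)
lemma v3_add_d[md]: assumes "dim_row A1 = dim_row B1" "dim_row A2 = dim_row B2" "dim_row A3 = dim_row B3"
  "dim_col A2 = dim_col A1" "dim_col A3 = dim_col A1" "dim_col B1 = dim_col A1" "dim_col B2 = dim_col A1" "dim_col B3 = dim_col A1"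
  shows "vstack3 A1 A2 A3 + vstack3 B1 B2 B3 = vstack3 (A1 + B1) (A2 + B2) (A3 + B3)"
  by (rule v3_add[of _ "dim_row A1" "dim_col A1" _ "dim_row A2" _ "dim_row A3"];
      rule carrier_matI; simp add: assms)
lemma v3_smult_d[md]: assumes "dim_col A2 = dim_col A1" "dim_col A3 = dim_col A1"
  shows "x \<cdot>\<^sub>m vstack3 A1 A2 A3 = vstack3 (x \<cdot>\<^sub>m A1) (x \<cdot>\<^sub>m A2) (x \<cdot>\<^sub>m A3)"
  by (rule v3_smult[of _ "dim_row A1" "dim_col A1" _ "dim_row A2" _ "dim_row A3"];
      rule carrier_matI; simp add: assms)
lemma v3_uminus_d[md]: assumes "dim_col A2 = dim_col A1" "dim_col A3 = dim_col A1"
  shows "- vstack3 A1 A2 A3 = vstack3 (- A1) (- A2) (- A3)"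
  by (rule v3_uminus[of _ "dim_row A1" "dim_col A1" _ "dim_row A2" _ "dim_row A3"];
      rule carrier_matI; simp add: assms)
lemma h3_mult_d[md]: assumes "dim_col Z = dim_row A1" "dim_row A2 = dim_row A1" "dim_row A3 = dim_row A1"
  shows "Z * hstack3 A1 A2 A3 = hstack3 (Z * A1) (Z * A2) (Z * A3)"
  by (rule h3_mult[of _ "dim_row A1" "dim_col A1" _ "dim_col A2" _ "dim_col A3" _ "dim_row Z"];
      rule carrier_matI; simp add: assms)
lemma uminus_r_d[md]: "(A::'a::ab_group_add mat) + - A = 0\<^sub>m (dim_row A) (dim_col A)"
  by (rule eq_matI) auto
lemma v3_minus_d[md]: assumes "dim_row A1 = dim_row B1" "dim_row A2 = dim_row B2" "dim_row A3 = dim_row B3"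
  "dim_col A2 = dim_col A1" "dim_col A3 = dim_col A1" "dim_col B1 = dim_col A1" "dim_col B2 = dim_col A1" "dim_col B3 = dim_col A1"
  shows "vstack3 A1 A2 A3 - vstack3 B1 B2 B3 = vstack3 (A1 - B1) (A2 - B2) (A3 - B3)"
  using assms unfolding vstack3_def vstack_def by (intro eq_matI) auto
lemma v3_cong: "A1 = B1 \<Longrightarrow> A2 = B2 \<Longrightarrow> A3 = B3 \<Longrightarrow> vstack3 A1 A2 A3 = vstack3 B1 B2 B3" by simp
lemma uminus_l_d[md]: "- (A::'a::ab_group_add mat) + A = 0\<^sub>m (dim_row A) (dim_col A)"
  by (rule eq_matI) auto
lemma smult_one_d[md]: "(1::'a::monoid_mult) \<cdot>\<^sub>m A = A"
  by (rule eq_matI) auto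
lemma smult_mzero_d[md]: "(0::'a::mult_zero) \<cdot>\<^sub>m A = 0\<^sub>m (dim_row A) (dim_col A)"
  by (rule eq_matI) auto

locale pqrs =
  fixes m a b :: nat and S P Q R :: "complex mat"
  assumes S[simp]: "S \<in> carrier_mat m m" and P[simp]: "P \<in> carrier_mat m b"
    and invS: "invertible_mat S"
    and Q[simp]: "Q \<in> carrier_mat a b" and R[simp]: "R \<in> carrier_mat a m"
begin

lemma dims[simp]: "dim_row S = m" "dim_col S = m" "dim_row P = m" "dim_col P = b" "dim_row Q = a" "dim_col Q = b"
   "dim_row R = a" "dim_col R = m"
  using carrier_matD[OF S] carrier_matD[OF P] carrier_matD[OF Q] carrier_matD[OF R] by auto

definition "E = vstack3 (1\<^sub>m m) (0\<^sub>m a m) (adj P)"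
definition "M = vstack3 (adj R) (1\<^sub>m a) (adj Q)"
definition "N = R + Q * adj P"
definition "Gi = 1\<^sub>m a + R * adj R + Q * adj Q"
definition "G = minv Gi"
definition "U1 = hstack3 S (- (S * adj R)) (0\<^sub>m m b)"
definition "V = hstack3 (- adj P) (adj (R * P - Q)) (1\<^sub>m b)"
definition "Ea = hstack3 (1\<^sub>m m) (0\<^sub>m m a) P"
definition "Ma = hstack3 R (1\<^sub>m a) Q"
definition "J3 = vstack3 (0\<^sub>m m b) (0\<^sub>m a b) (1\<^sub>m b)"
definition "Am = A_PQRS P Q R S"
definition "Bm = B_PQRS P Q R S"
definition "K z = - Am + z \<cdot>\<^sub>m Bm"

abbreviation "n \<equiv> m + a + b"

lemma dims2[simp]: "dim_row E = n" "dim_col E = m" "dim_row M = n" "dim_col M = a" "dim_row N = a" "dim_col N = m"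
   "dim_row Gi = a" "dim_col Gi = a" "dim_row U1 = m" "dim_col U1 = n" "dim_row V = b" "dim_col V = n"
   "dim_row Ea = m" "dim_col Ea = n" "dim_row Ma = a" "dim_col Ma = n" "dim_row J3 = n" "dim_col J3 = b"
  unfolding E_def M_def N_def Gi_def U1_def V_def Ea_def Ma_def J3_def by auto

lemma carr: "U1 \<in> carrier_mat m n" "V \<in> carrier_mat b n" "Ea \<in> carrier_mat m n" "Ma \<in> carrier_mat a n"
  by (rule carrier_matI; simp)+
lemma Am_block: "Am = vstack3 U1 (0\<^sub>m a n) V"
  unfolding Am_def U1_def V_def by (rule A_block) auto
lemma Bm_block: "Bm = vstack3 Ea Ma (0\<^sub>m b n)"
  unfolding Bm_def Ea_def Ma_def by (rule B_block) auto
lemma dims3[simp]: "dim_row Am = n" "dim_col Am = n" "dim_row Bm = n" "dim_col Bm = n" "dim_row (K z) = n" "dim_col (K z) = n"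
  unfolding K_def Am_block Bm_block by auto

lemma adjE: "adj E = Ea" unfolding E_def Ea_def by (subst adj_v3) auto
lemma adjM: "adj M = Ma" unfolding M_def Ma_def by (subst adj_v3) auto

lemma U1M: "U1 * M = 0\<^sub>m m a"
  unfolding U1_def M_def by (subst hv3_mult[of _ m m _ a _ b]) (auto simp: md)


lemma adjN: "adj N = adj R + P * adj Q"
  unfolding N_def by (simp add: md)
lemma adjRPQ: "adj (R * P - Q) = adj P * adj R - adj Q"
  by (simp add: md)
lemma adjGi: "adj Gi = Gi"
  unfolding Gi_def by (simp add: md)

lemma VM: "V * M = 0\<^sub>m b a"
  unfolding V_def M_def adjRPQ by (subst hv3_mult[of _ b m _ a _ b]) (auto simp: md intro!: eq_matI)
lemma EaM: "Ea * M = adj N"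
  unfolding Ea_def M_def adjN by (subst hv3_mult[of _ m m _ a _ b]) (auto simp: md intro!: eq_matI)
lemma MaM: "Ma * M = Gi"
  unfolding Ma_def M_def Gi_def by (subst hv3_mult[of _ a m _ a _ b]) (auto simp: md intro!: eq_matI)
lemma U1E: "U1 * E = S"
  unfolding U1_def E_def by (subst hv3_mult[of _ m m _ a _ b]) (auto simp: md intro!: eq_matI)
lemma VE: "V * E = 0\<^sub>m b m"
  unfolding V_def E_def by (subst hv3_mult[of _ b m _ a _ b]) (auto simp: md intro!: eq_matI)
lemma MaE: "Ma * E = N"
  unfolding Ma_def E_def N_def by (subst hv3_mult[of _ a m _ a _ b]) (auto simp: md intro!: eq_matI)
lemma U1J3: "U1 * J3 = 0\<^sub>m m b"
  unfolding U1_def J3_def by (subst hv3_mult[of _ m m _ a _ b]) (auto simp: md intro!: eq_matI)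
lemma VJ3: "V * J3 = 1\<^sub>m b"
  unfolding V_def J3_def by (subst hv3_mult[of _ b m _ a _ b]) (auto simp: md intro!: eq_matI)
lemma EaJ3: "Ea * J3 = P"
  unfolding Ea_def J3_def by (subst hv3_mult[of _ m m _ a _ b]) (auto simp: md intro!: eq_matI)
lemma MaJ3: "Ma * J3 = Q"
  unfolding Ma_def J3_def by (subst hv3_mult[of _ a m _ a _ b]) (auto simp: md intro!: eq_matI)


lemma assoc_form: assumes "A * B = C" "dim_col A = dim_row B" "dim_col B = dim_row Z" shows "A * (B * Z) = C * Z"
  using assoc_d[OF assms(2,3)] assms(1) by simp

lemma Gi_det: "det Gi \<noteq> 0"
proof
  assume "det Gi = 0"
  have Gic: "Gi \<in> carrier_mat a a" by (rule carrier_matI) simp_all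
  from \<open>det Gi = 0\<close> det_0_iff_vec_prod_zero_field[OF Gic] obtain v where
    v: "v \<in> carrier_vec a" "v \<noteq> 0\<^sub>v a" "Gi *\<^sub>v v = 0\<^sub>v a" by auto
  let ?v = "\<lambda>i. v $ i"
  have row0: "(\<Sum>t<a. Gi $$ (i,t) * ?v t) = 0" if i: "i < a" for i
  proof -
    have "(Gi *\<^sub>v v) $ i = 0" using v(3) i by simp
    thus ?thesis using i v(1) by (simp add: scalar_prod_def lessThan_atLeast0)
  qed
  have Gie: "Gi $$ (i,t) = (if i = t then 1 else 0) + (R * adj R) $$ (i,t) + (Q * adj Q) $$ (i,t)"
    if "i < a" "t < a" for i t using that unfolding Gi_def by simp
  have "0 = (\<Sum>i<a. cnj (?v i) * (\<Sum>t<a. Gi $$ (i,t) * ?v t))" by (simp add: row0)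
  also have "\<dots> = (\<Sum>i<a. cnj (?v i) * ?v i) + (\<Sum>i<a. cnj (?v i) * (\<Sum>t<a. (R * adj R) $$ (i,t) * ?v t))
     + (\<Sum>i<a. cnj (?v i) * (\<Sum>t<a. (Q * adj Q) $$ (i,t) * ?v t))"
  proof -
    have inner: "(\<Sum>t<a. Gi $$ (i,t) * ?v t) = ?v i + (\<Sum>t<a. (R * adj R) $$ (i,t) * ?v t) + (\<Sum>t<a. (Q * adj Q) $$ (i,t) * ?v t)"
      if i: "i < a" for i
    proof -
      have "(\<Sum>t<a. Gi $$ (i,t) * ?v t) = (\<Sum>t<a. (if i = t then ?v t else 0) + (R * adj R) $$ (i,t) * ?v t + (Q * adj Q) $$ (i,t) * ?v t)"
        by (rule sum.cong) (auto simp: Gie i distrib_right)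
      also have "\<dots> = ?v i + (\<Sum>t<a. (R * adj R) $$ (i,t) * ?v t) + (\<Sum>t<a. (Q * adj Q) $$ (i,t) * ?v t)"
        using i by (simp add: sum.distrib)
      finally show ?thesis .
    qed
    have "(\<Sum>i<a. cnj (?v i) * (\<Sum>t<a. Gi $$ (i,t) * ?v t)) = (\<Sum>i<a. cnj (?v i) * ?v i +
       cnj (?v i) * (\<Sum>t<a. (R * adj R) $$ (i,t) * ?v t) + cnj (?v i) * (\<Sum>t<a. (Q * adj Q) $$ (i,t) * ?v t))"
      by (rule sum.cong) (simp_all add: inner distrib_left)
    thus ?thesis by (simp add: sum.distrib)
  qed
  also have "\<dots> = of_real ((\<Sum>i<a. (cmod (?v i))^2) + (\<Sum>p<m. (cmod (\<Sum>t<a. cnj (R $$ (t,p)) * ?v t))^2)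
      + (\<Sum>p<b. (cmod (\<Sum>t<a. cnj (Q $$ (t,p)) * ?v t))^2))"
  proof -
    have "(\<Sum>i<a. cnj (?v i) * ?v i) = (\<Sum>i<a. of_real ((cmod (?v i))^2))"
      by (rule sum.cong[OF refl], subst complex_norm_square, rule mult.commute)
    also have "\<dots> = of_real (\<Sum>i<a. (cmod (?v i))^2)" by (rule of_real_sum[symmetric])
    finally have h: "(\<Sum>i<a. cnj (?v i) * ?v i) = of_real (\<Sum>i<a. (cmod (?v i))^2)" .
    show ?thesis unfolding h quad_form[OF R, of ?v] quad_form[OF Q, of ?v] of_real_add ..
  qed
  finally have eq0: "0 = complex_of_real ((\<Sum>i<a. (cmod (?v i))^2) + (\<Sum>p<m. (cmod (\<Sum>t<a. cnj (R $$ (t,p)) * ?v t))^2)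
      + (\<Sum>p<b. (cmod (\<Sum>t<a. cnj (Q $$ (t,p)) * ?v t))^2))" .
  have eq: "(\<Sum>i<a. (cmod (?v i))^2) + (\<Sum>p<m. (cmod (\<Sum>t<a. cnj (R $$ (t,p)) * ?v t))^2)
      + (\<Sum>p<b. (cmod (\<Sum>t<a. cnj (Q $$ (t,p)) * ?v t))^2) = 0"
    using eq0[symmetric] unfolding of_real_eq_0_iff .
  have "\<exists>i<a. ?v i \<noteq> 0"
  proof (rule ccontr)
    assume "\<not> (\<exists>i<a. ?v i \<noteq> 0)"
    hence "v = 0\<^sub>v a" using v(1) by (intro eq_vecI) (simp_all add: carrier_vecD)
    with v(2) show False by simp
  qed
  then obtain i where i: "i < a" "?v i \<noteq> 0" by blast
  have "(cmod (?v i))^2 \<le> (\<Sum>i<a. (cmod (?v i))^2)" by (rule member_le_sum) (use i in auto)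
  moreover have "0 < (cmod (?v i))^2" using i by simp
  moreover have "0 \<le> (\<Sum>p<m. (cmod (\<Sum>t<a. cnj (R $$ (t,p)) * ?v t))^2)" by (intro sum_nonneg) auto
  moreover have "0 \<le> (\<Sum>p<b. (cmod (\<Sum>t<a. cnj (Q $$ (t,p)) * ?v t))^2)" by (intro sum_nonneg) auto
  ultimately show False using eq by linarith
qed

lemma G_props: "G \<in> carrier_mat a a" "Gi * G = 1\<^sub>m a" "G * Gi = 1\<^sub>m a"
proof -
  have "Gi \<in> carrier_mat a a" by (rule carrier_matI) simp_all
  from minv_props_det[OF this Gi_det] show "G \<in> carrier_mat a a" "Gi * G = 1\<^sub>m a" "G * Gi = 1\<^sub>m a"
    unfolding G_def by auto
qed

lemma dimsG[simp]: "dim_row G = a" "dim_col G = a" using G_props(1) by auto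

lemma adjG: "adj G = G"
proof -
  have "adj G * Gi = adj G * adj Gi" by (simp add: adjGi)
  also have "\<dots> = adj (Gi * G)" by (simp add: md)
  also have "\<dots> = 1\<^sub>m a" by (simp add: G_props)
  finally have h: "adj G * Gi = 1\<^sub>m a" .
  have "adj G = adj G * (Gi * G)" by (simp add: G_props)
  also have "\<dots> = (adj G * Gi) * G" by (simp add: md)
  also have "\<dots> = G" by (simp add: h)
  finally show ?thesis .
qed

definition "Si = minv S"
lemma Si_props: "Si \<in> carrier_mat m m" "S * Si = 1\<^sub>m m" "Si * S = 1\<^sub>m m"
proof -
  obtain B where h: "S * B = 1\<^sub>m m" "B * S = 1\<^sub>m (dim_row B)"
    using invS unfolding invertible_mat_def inverts_mat_def by auto
  have "dim_col B = m" using arg_cong[OF h(1), of dim_col] by simp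
  moreover have "dim_row B = m" using arg_cong[OF h(2), of dim_col] by simp
  ultimately have "B \<in> carrier_mat m m" by auto
  from minv_props[OF S this h(1)] show "Si \<in> carrier_mat m m" "S * Si = 1\<^sub>m m" "Si * S = 1\<^sub>m m"
    unfolding Si_def by auto
qed
lemma dimsSi[simp]: "dim_row Si = m" "dim_col Si = m" using Si_props(1) by auto

definition "X = E - M * G * N"
definition "D = Ea * X"
definition "T = Si * D"
lemma dimsX[simp]: "dim_row X = n" "dim_col X = m" "dim_row D = m" "dim_col D = m" "dim_row T = m" "dim_col T = m"
  unfolding X_def D_def T_def by auto

lemmas base = U1M VM EaM MaM U1E VE MaE U1J3 VJ3 EaJ3 MaJ3 G_props(2,3) Si_props(2,3)
lemma base_assoc0[simp]: "dim_row Z = a \<Longrightarrow> U1 * (M * Z) = 0\<^sub>m m a * Z"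
  by (rule assoc_form[OF U1M]) simp_all
lemma base_assoc1[simp]: "dim_row Z = a \<Longrightarrow> V * (M * Z) = 0\<^sub>m b a * Z"
  by (rule assoc_form[OF VM]) simp_all
lemma base_assoc2[simp]: "dim_row Z = a \<Longrightarrow> Ea * (M * Z) = adj N * Z"
  by (rule assoc_form[OF EaM]) simp_all
lemma base_assoc3[simp]: "dim_row Z = a \<Longrightarrow> Ma * (M * Z) = Gi * Z"
  by (rule assoc_form[OF MaM]) simp_all
lemma base_assoc4[simp]: "dim_row Z = m \<Longrightarrow> U1 * (E * Z) = S * Z"
  by (rule assoc_form[OF U1E]) simp_all
lemma base_assoc5[simp]: "dim_row Z = m \<Longrightarrow> V * (E * Z) = 0\<^sub>m b m * Z"
  by (rule assoc_form[OF VE]) simp_all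
lemma base_assoc6[simp]: "dim_row Z = m \<Longrightarrow> Ma * (E * Z) = N * Z"
  by (rule assoc_form[OF MaE]) simp_all
lemma base_assoc7[simp]: "dim_row Z = b \<Longrightarrow> U1 * (J3 * Z) = 0\<^sub>m m b * Z"
  by (rule assoc_form[OF U1J3]) simp_all
lemma base_assoc8[simp]: "dim_row Z = b \<Longrightarrow> V * (J3 * Z) = 1\<^sub>m b * Z"
  by (rule assoc_form[OF VJ3]) simp_all
lemma base_assoc9[simp]: "dim_row Z = b \<Longrightarrow> Ea * (J3 * Z) = P * Z"
  by (rule assoc_form[OF EaJ3]) simp_all
lemma base_assoc10[simp]: "dim_row Z = b \<Longrightarrow> Ma * (J3 * Z) = Q * Z"
  by (rule assoc_form[OF MaJ3]) simp_all
lemma base_assoc11[simp]: "dim_row Z = a \<Longrightarrow> Gi * (G * Z) = Z"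
  using assoc_form[OF G_props(2), of Z] by simp
lemma base_assoc12[simp]: "dim_row Z = a \<Longrightarrow> G * (Gi * Z) = Z"
  using assoc_form[OF G_props(3), of Z] by simp
lemma base_assoc13[simp]: "dim_row Z = m \<Longrightarrow> S * (Si * Z) = Z"
  using assoc_form[OF Si_props(2), of Z] by simp
lemma base_assoc14[simp]: "dim_row Z = m \<Longrightarrow> Si * (S * Z) = Z"
  using assoc_form[OF Si_props(3), of Z] by simp

lemma U1X: "U1 * X = S"
  unfolding X_def by (simp add: md base)


lemma VX: "V * X = 0\<^sub>m b m"
  unfolding X_def by (simp add: md base)
lemma MaX: "Ma * X = 0\<^sub>m a m"
  unfolding X_def by (simp add: md base)
lemma EaX: "Ea * X = D" unfolding D_def ..
lemma adjX: "adj X = Ea - adj N * (G * Ma)"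
  unfolding X_def by (simp add: md adjE adjM adjG)
lemma XX: "adj X * X = D"
  unfolding adjX by (simp add: md EaX MaX)
lemma X_assoc[simp]:
  "dim_row Z = m \<Longrightarrow> Ea * (X * Z) = D * Z"
  "dim_row Z = m \<Longrightarrow> U1 * (X * Z) = S * Z"
  "dim_row Z = m \<Longrightarrow> Ma * (X * Z) = 0\<^sub>m a m * Z"
  "dim_row Z = m \<Longrightarrow> V * (X * Z) = 0\<^sub>m b m * Z"
  "dim_row Z = m \<Longrightarrow> adj X * (X * Z) = D * Z"
  apply (rule assoc_form[OF EaX]; simp) apply (rule assoc_form[OF U1X]; simp) apply (rule assoc_form[OF MaX]; simp)
  apply (rule assoc_form[OF VX]; simp) apply (rule assoc_form[OF XX]; simp) done
lemma dimsadjN[simp]: "dim_row (adj N) = m" "dim_col (adj N) = a" by auto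

lemma KY: assumes Y: "dim_row Y = n"
  shows "K z * Y = vstack3 (z \<cdot>\<^sub>m (Ea * Y) - U1 * Y) (z \<cdot>\<^sub>m (Ma * Y)) (- (V * Y))"
proof -
  let ?s = "dim_col Y"
  have Yc: "Y \<in> carrier_mat n ?s" using Y by (rule carrier_matI) simp
  have "K z * Y = - (Am * Y) + z \<cdot>\<^sub>m (Bm * Y)"
    unfolding K_def using Y by (simp add: md)
  also have "\<dots> = - vstack3 (U1 * Y) (0\<^sub>m a n * Y) (V * Y) + z \<cdot>\<^sub>m vstack3 (Ea * Y) (Ma * Y) (0\<^sub>m b n * Y)"
    unfolding Am_block Bm_block
    by (simp only: v3_mult[OF carr(1) zero_carrier_mat carr(2) Yc] v3_mult[OF carr(3) carr(4) zero_carrier_mat Yc])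
  also have "\<dots> = vstack3 (- (U1 * Y)) (- (0\<^sub>m a n * Y)) (- (V * Y)) + vstack3 (z \<cdot>\<^sub>m (Ea * Y)) (z \<cdot>\<^sub>m (Ma * Y)) (z \<cdot>\<^sub>m (0\<^sub>m b n * Y))"
    by (subst v3_uminus[of _ m ?s _ a _ b], (rule carrier_matI; simp add: Y)+,
        subst v3_smult[of _ m ?s _ a _ b], (rule carrier_matI; simp add: Y)+, rule refl)
  also have "\<dots> = vstack3 (- (U1 * Y) + z \<cdot>\<^sub>m (Ea * Y)) (- (0\<^sub>m a n * Y) + z \<cdot>\<^sub>m (Ma * Y)) (- (V * Y) + z \<cdot>\<^sub>m (0\<^sub>m b n * Y))"
    by (rule v3_add[of _ m ?s _ a _ b]; rule carrier_matI; simp add: Y)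
  also have "\<dots> = vstack3 (z \<cdot>\<^sub>m (Ea * Y) - U1 * Y) (z \<cdot>\<^sub>m (Ma * Y)) (- (V * Y))"
  proof -
    have "- (U1 * Y) + z \<cdot>\<^sub>m (Ea * Y) = z \<cdot>\<^sub>m (Ea * Y) - U1 * Y" by (rule eq_matI) auto
    moreover have "- (0\<^sub>m a n * Y) + z \<cdot>\<^sub>m (Ma * Y) = z \<cdot>\<^sub>m (Ma * Y)" by (rule eq_matI) (auto simp: Y)
    moreover have "- (V * Y) + z \<cdot>\<^sub>m (0\<^sub>m b n * Y) = - (V * Y)" by (rule eq_matI) (auto simp: Y)
    ultimately show ?thesis by simp
  qed
  finally show ?thesis .
qed

lemma KX: assumes Z: "dim_row Z = m"
  shows "K z * (X * Z) = vstack3 ((z \<cdot>\<^sub>m D - S) * Z) (0\<^sub>m a (dim_col Z)) (0\<^sub>m b (dim_col Z))"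
proof -
  have "K z * (X * Z) = vstack3 (z \<cdot>\<^sub>m (Ea * (X * Z)) - U1 * (X * Z)) (z \<cdot>\<^sub>m (Ma * (X * Z))) (- (V * (X * Z)))"
    by (rule KY) (simp add: Z)
  also have "\<dots> = vstack3 ((z \<cdot>\<^sub>m D - S) * Z) (0\<^sub>m a (dim_col Z)) (0\<^sub>m b (dim_col Z))"
    using Z by (simp add: md)
  finally show ?thesis .
qed


lemma KM: assumes Z: "dim_row Z = a"
  shows "K z * (M * Z) = vstack3 (z \<cdot>\<^sub>m (adj N * Z)) (z \<cdot>\<^sub>m (Gi * Z)) (0\<^sub>m b (dim_col Z))"
proof -
  have "K z * (M * Z) = vstack3 (z \<cdot>\<^sub>m (Ea * (M * Z)) - U1 * (M * Z)) (z \<cdot>\<^sub>m (Ma * (M * Z))) (- (V * (M * Z)))"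
    by (rule KY) (simp add: Z)
  also have "\<dots> = vstack3 (z \<cdot>\<^sub>m (adj N * Z)) (z \<cdot>\<^sub>m (Gi * Z)) (0\<^sub>m b (dim_col Z))"
    using Z by (simp add: md)
  finally show ?thesis .
qed

lemma KJ3: assumes Z: "dim_row Z = b"
  shows "K z * (J3 * Z) = vstack3 (z \<cdot>\<^sub>m (P * Z)) (z \<cdot>\<^sub>m (Q * Z)) (- Z)"
proof -
  have "K z * (J3 * Z) = vstack3 (z \<cdot>\<^sub>m (Ea * (J3 * Z)) - U1 * (J3 * Z)) (z \<cdot>\<^sub>m (Ma * (J3 * Z))) (- (V * (J3 * Z)))"
    by (rule KY) (simp add: Z)
  also have "\<dots> = vstack3 (z \<cdot>\<^sub>m (P * Z)) (z \<cdot>\<^sub>m (Q * Z)) (- Z)"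
    using Z by (simp add: md)
  finally show ?thesis .
qed


context
  fixes z :: complex and W :: "complex mat"
  assumes z: "z \<noteq> 0" and Wd[simp]: "dim_row W = m" "dim_col W = m"
    and WT: "(1\<^sub>m m - z \<cdot>\<^sub>m T) * W = 1\<^sub>m m"
begin

lemma DS_W: "(z \<cdot>\<^sub>m D - S) * W = - S"
proof -
  have "z \<cdot>\<^sub>m D - S = - (S * (1\<^sub>m m - z \<cdot>\<^sub>m T))"
    unfolding T_def by (simp add: md) (rule eq_matI; simp)
  hence "(z \<cdot>\<^sub>m D - S) * W = - (S * ((1\<^sub>m m - z \<cdot>\<^sub>m T) * W))"
    by (simp add: md)
  also have "\<dots> = - S" by (simp add: WT)
  finally show ?thesis .
qed

definition "C0 = z \<cdot>\<^sub>m D - S"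
lemma dimsC0[simp]: "dim_row C0 = m" "dim_col C0 = m" unfolding C0_def by auto
lemma C0W[simp]: "dim_row Z = m \<Longrightarrow> C0 * (W * Z) = - (S * Z)"
  using assoc_form[OF DS_W, of Z] unfolding C0_def by simp
lemma KX': "dim_row Z = m \<Longrightarrow> K z * (X * Z) = vstack3 (C0 * Z) (0\<^sub>m a (dim_col Z)) (0\<^sub>m b (dim_col Z))"
  unfolding C0_def by (rule KX)

definition "Y1 = X * (- (W * Si))"
definition "Y2 = M * ((1 / z) \<cdot>\<^sub>m G) + X * (W * (Si * (adj N * G)))"
definition "Y3 = J3 * (- 1\<^sub>m b) + Y1 * (z \<cdot>\<^sub>m P) + Y2 * (z \<cdot>\<^sub>m Q)"

lemma KY1: "K z * Y1 = vstack3 (1\<^sub>m m) (0\<^sub>m a m) (0\<^sub>m b m)"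
  unfolding Y1_def by (simp add: KX' md base)


lemma dimsY[simp]: "dim_row Y1 = n" "dim_col Y1 = m" "dim_row Y2 = n" "dim_col Y2 = a" "dim_row Y3 = n" "dim_col Y3 = b"
  unfolding Y1_def Y2_def Y3_def by auto

lemma KY2: "K z * Y2 = vstack3 (0\<^sub>m m a) (1\<^sub>m a) (0\<^sub>m b a)"
  unfolding Y2_def using z by (simp add: KX' KM md base)

lemma KY1_assoc: "dim_row Z = m \<Longrightarrow> K z * (Y1 * Z) = vstack3 Z (0\<^sub>m a (dim_col Z)) (0\<^sub>m b (dim_col Z))"
  using assoc_form[OF KY1, of Z] by (simp add: md)
lemma KY2_assoc: "dim_row Z = a \<Longrightarrow> K z * (Y2 * Z) = vstack3 (0\<^sub>m m (dim_col Z)) Z (0\<^sub>m b (dim_col Z))"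
  using assoc_form[OF KY2, of Z] by (simp add: md)

lemma KJ3': "K z * J3 = vstack3 (z \<cdot>\<^sub>m P) (z \<cdot>\<^sub>m Q) (- 1\<^sub>m b)"
  using KJ3[of "1\<^sub>m b" z] by simp
lemma KY3: "K z * Y3 = vstack3 (0\<^sub>m m b) (0\<^sub>m a b) (1\<^sub>m b)"
  unfolding Y3_def by (simp add: KJ3' KY1_assoc KY2_assoc md base)

definition "Yinv = hstack3 Y1 Y2 Y3"
lemma Yinv_carr: "Yinv \<in> carrier_mat n n" unfolding Yinv_def by (rule carrier_matI) auto
lemma KYinv: "K z * Yinv = 1\<^sub>m n"
  unfolding Yinv_def by (simp add: md KY1 KY2 KY3 one_block2)


definition "F = - 1\<^sub>m n + 2 \<cdot>\<^sub>m (M * G * adj M) - (2 * z) \<cdot>\<^sub>m (X * W * Si * adj X)"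

lemma F_alt: "F = - 1\<^sub>m n + 2 \<cdot>\<^sub>m (M * (G * Ma)) - (2 * z) \<cdot>\<^sub>m (X * (W * (Si * adj X)))"
  unfolding F_def adjM by (simp add: assoc_d)

lemma KF1: "K z * (M * (G * Ma)) = vstack3 (z \<cdot>\<^sub>m (adj N * (G * Ma))) (z \<cdot>\<^sub>m Ma) (0\<^sub>m b n)"
  by (simp add: KM base)
lemma KF2: "K z * (X * (W * (Si * adj X))) = vstack3 (- adj X) (0\<^sub>m a n) (0\<^sub>m b n)"
  by (simp add: KX' base)


lemma KF: "K z * F = - K z + (2 * z) \<cdot>\<^sub>m Bm"
proof -
  have "K z * F = (- K z + 2 \<cdot>\<^sub>m (K z * (M * (G * Ma)))) - (2 * z) \<cdot>\<^sub>m (K z * (X * (W * (Si * adj X))))"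
    unfolding F_alt by (simp add: md)
  also have "\<dots> = - K z + (2 \<cdot>\<^sub>m vstack3 (z \<cdot>\<^sub>m (adj N * (G * Ma))) (z \<cdot>\<^sub>m Ma) (0\<^sub>m b n)
       - (2 * z) \<cdot>\<^sub>m vstack3 (- adj X) (0\<^sub>m a n) (0\<^sub>m b n))"
    unfolding KF1 KF2 by (rule eq_matI) auto
  also have "2 \<cdot>\<^sub>m vstack3 (z \<cdot>\<^sub>m (adj N * (G * Ma))) (z \<cdot>\<^sub>m Ma) (0\<^sub>m b n)
       - (2 * z) \<cdot>\<^sub>m vstack3 (- adj X) (0\<^sub>m a n) (0\<^sub>m b n) = (2 * z) \<cdot>\<^sub>m Bm"
    unfolding Bm_block adjX
    by (simp add: md, intro v3_cong eq_matI) (auto simp: algebra_simps)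
  finally show ?thesis .
qed


lemma K_inv: "invertible_mat (K z)" "minv (K z) * K z = 1\<^sub>m n" "minv (K z) \<in> carrier_mat n n"
proof -
  have Kc: "K z \<in> carrier_mat n n" by (rule carrier_matI) auto
  have YK: "Yinv * K z = 1\<^sub>m n" using mat_mult_left_right_inverse[OF Kc Yinv_carr KYinv] .
  show "invertible_mat (K z)" unfolding invertible_mat_def inverts_mat_def
    using KYinv YK Yinv_carr by (auto intro!: exI[of _ Yinv] simp: square_mat.simps)
  show "minv (K z) * K z = 1\<^sub>m n" "minv (K z) \<in> carrier_mat n n"
    using minv_props[OF Kc Yinv_carr KYinv] by auto
qed

lemma minvK_dims[simp]: "dim_row (minv (K z)) = n" "dim_col (minv (K z)) = n" using K_inv(3) by auto
lemma dimsF[simp]: "dim_row F = n" "dim_col F = n" unfolding F_def by auto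

lemma scat_F: "- (minv (K z) * (- Am - z \<cdot>\<^sub>m Bm)) = F"
proof -
  have "- Am - z \<cdot>\<^sub>m Bm = - (- K z + (2 * z) \<cdot>\<^sub>m Bm)" unfolding K_def by (rule eq_matI) (auto simp: algebra_simps)
  hence "- Am - z \<cdot>\<^sub>m Bm = - (K z * F)" by (simp only: KF)
  hence "- (minv (K z) * (- Am - z \<cdot>\<^sub>m Bm)) = minv (K z) * K z * F" by (simp add: md)
  also have "\<dots> = F" by (simp add: K_inv(2))
  finally show ?thesis .
qed

end

end

theorem mainTheorem5:
  fixes n rA rB m a b :: nat and S P Q R :: "complex mat"
  assumes "rA \<le> n" and "rB \<le> n"
    and "m = rA + rB - n" and "m \<ge> 1" and "a = n - rA" and "b = n - rB"
    and "S \<in> carrier_mat m m" and "invertible_mat S" and "mat_adjoint S = S"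
    and "P \<in> carrier_mat m b" and "Q \<in> carrier_mat a b" and "R \<in> carrier_mat a m"
  shows "(\<exists>\<delta>>0. \<forall>k::real. 0 < k \<and> k < \<delta> \<longrightarrow>
           invertible_mat (- A_PQRS P Q R S + (\<i> * complex_of_real k) \<cdot>\<^sub>m B_PQRS P Q R S)
         \<and> (\<forall>i<m. \<forall>l<m. summable (\<lambda>j. (((\<i> * complex_of_real k) ^ j)
                  \<cdot>\<^sub>m (minv S * mat_adjoint (Xmat P Q R S) * Xmat P Q R S) ^\<^sub>m j) $$ (i, l)))
         \<and> scat P Q R S k =
             - 1\<^sub>m n + 2 \<cdot>\<^sub>m (M_Q Q R * G_QR Q R * mat_adjoint (M_Q Q R))
             - (2 * \<i> * complex_of_real k) \<cdot>\<^sub>m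
                 (Xmat P Q R S
                  * mat m m (\<lambda>(i, l). \<Sum>j. (((\<i> * complex_of_real k) ^ j)
                      \<cdot>\<^sub>m (minv S * mat_adjoint (Xmat P Q R S) * Xmat P Q R S) ^\<^sub>m j) $$ (i, l))
                  * minv S * mat_adjoint (Xmat P Q R S)))
       \<and> (\<forall>i<n. \<forall>l<n. ((\<lambda>k. scat P Q R S k $$ (i, l)) \<longlongrightarrow>
             (- 1\<^sub>m n + 2 \<cdot>\<^sub>m (M_Q Q R * G_QR Q R * mat_adjoint (M_Q Q R))) $$ (i, l)) (at_right 0))"
proof -
  have nE: "n = m + a + b" using assms(1-6) by arith
  interpret pq: pqrs m a b S P Q R using assms by unfold_locales auto
  have MQ: "M_Q Q R = pq.M" unfolding M_Q_def pq.M_def vstack3_def by simp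
  have GQ: "G_QR Q R = pq.G" unfolding G_QR_def pq.G_def pq.Gi_def by simp
  have XQ: "Xmat P Q R S = pq.X" unfolding Xmat_def pq.X_def pq.E_def pq.N_def vstack3_def MQ GQ by simp
  have SiQ: "minv S = pq.Si" unfolding pq.Si_def ..
  have TQ: "minv S * mat_adjoint (Xmat P Q R S) * Xmat P Q R S = pq.T"
    unfolding XQ SiQ pq.T_def by (simp add: md pq.XX)
  have Tc: "pq.T \<in> carrier_mat m m" by (rule carrier_matI) simp_all
  define \<delta> where "\<delta> = 1 / (2 * (nu pq.T + 1))"
  have \<delta>pos: "\<delta> > 0" unfolding \<delta>_def using nu_nonneg[of pq.T] by simp
  define Fm where "Fm = - 1\<^sub>m n + 2 \<cdot>\<^sub>m (M_Q Q R * G_QR Q R * mat_adjoint (M_Q Q R))"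
  define Wk where "Wk = (\<lambda>k::real. mat m m (\<lambda>(i, l). \<Sum>j. (((\<i> * complex_of_real k) ^ j)
                      \<cdot>\<^sub>m (minv S * mat_adjoint (Xmat P Q R S) * Xmat P Q R S) ^\<^sub>m j) $$ (i, l)))"
  have main: "invertible_mat (- A_PQRS P Q R S + (\<i> * complex_of_real k) \<cdot>\<^sub>m B_PQRS P Q R S)
         \<and> (\<forall>i<m. \<forall>l<m. summable (\<lambda>j. (((\<i> * complex_of_real k) ^ j)
                  \<cdot>\<^sub>m (minv S * mat_adjoint (Xmat P Q R S) * Xmat P Q R S) ^\<^sub>m j) $$ (i, l)))
         \<and> scat P Q R S k = Fm - (2 * \<i> * complex_of_real k) \<cdot>\<^sub>m
                 (Xmat P Q R S * Wk k * minv S * mat_adjoint (Xmat P Q R S))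
         \<and> (\<forall>i<m. \<forall>l<m. norm (Wk k $$ (i,l)) \<le> 2 * m)"
    if k: "0 < k" "k < \<delta>" for k
  proof -
    define z where "z = \<i> * complex_of_real k"
    have hz: "norm z * nu pq.T \<le> 1/2"
    proof -
      have "norm z = k" unfolding z_def using k by (simp add: norm_mult)
      moreover have "k * (2 * (nu pq.T + 1)) < 1" using k nu_nonneg[of pq.T] unfolding \<delta>_def
        by (simp add: field_simps)
      ultimately show ?thesis using k nu_nonneg[of pq.T] by (simp add: algebra_simps)
    qed
    have zne: "z \<noteq> 0" unfolding z_def using k by simp
    have WkE: "Wk k = Wm pq.T m z" unfolding Wk_def TQ z_def[symmetric] Wm_def[OF Tc hz] fs_def[OF Tc hz] ..
    let ?W = "Wm pq.T m z"
    have Wd: "dim_row ?W = m" "dim_col ?W = m" using dW[OF Tc hz] by auto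
    have CW': "(1\<^sub>m m - z \<cdot>\<^sub>m pq.T) * ?W = 1\<^sub>m m" by (rule CW[OF Tc hz])
    note KI = pq.K_inv[OF zne Wd CW']
    have KE: "- A_PQRS P Q R S + z \<cdot>\<^sub>m B_PQRS P Q R S = pq.K z" unfolding pq.K_def pq.Am_def pq.Bm_def ..
    have scatE: "scat P Q R S k = pq.F z ?W"
      unfolding scat_def Let_def z_def[symmetric] KE
      using pq.scat_F[OF zne Wd CW'] unfolding pq.Am_def pq.Bm_def by simp
    have FE: "pq.F z ?W = Fm - (2 * \<i> * complex_of_real k) \<cdot>\<^sub>m
                 (Xmat P Q R S * Wk k * minv S * mat_adjoint (Xmat P Q R S))"
      unfolding pq.F_def[OF zne Wd CW'] unfolding Fm_def MQ GQ XQ SiQ WkE nE z_def by (simp add: mult.assoc)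
    show ?thesis
    proof (intro conjI allI impI)
      show "invertible_mat (- A_PQRS P Q R S + (\<i> * complex_of_real k) \<cdot>\<^sub>m B_PQRS P Q R S)"
        using KI(1) KE unfolding z_def by simp
      show "summable (\<lambda>j. (((\<i> * complex_of_real k) ^ j)
                  \<cdot>\<^sub>m (minv S * mat_adjoint (Xmat P Q R S) * Xmat P Q R S) ^\<^sub>m j) $$ (i, l))"
        if "i < m" "l < m" for i l
        using fs_summable[OF Tc hz that] unfolding fs_def[OF Tc hz] unfolding TQ z_def .
      show "scat P Q R S k = Fm - (2 * \<i> * complex_of_real k) \<cdot>\<^sub>m
                 (Xmat P Q R S * Wk k * minv S * mat_adjoint (Xmat P Q R S))"
        using scatE FE by simp
      show "norm (Wk k $$ (i,l)) \<le> 2 * m" if "i < m" "l < m" for i l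
        using W_bound[OF Tc hz that] unfolding WkE .
    qed
  qed
  have Wk_dims: "dim_row (Wk k) = m" "dim_col (Wk k) = m" for k unfolding Wk_def by auto
  have nuW: "nu (Wk k) \<le> real m * real m * (2 * real m)" if k: "0 < k" "k < \<delta>" for k
  proof -
    have "nu (Wk k) = (\<Sum>i<m. \<Sum>l<m. norm (Wk k $$ (i,l)))" unfolding nu_def Wk_dims ..
    also have "\<dots> \<le> (\<Sum>i<m. \<Sum>l<m. 2 * real m)"
      by (intro sum_mono) (use main[OF k] in auto)
    also have "\<dots> = real m * real m * (2 * real m)" by simp
    finally show ?thesis .
  qed
  define Cb where "Cb = nu pq.X * (real m * real m * (2 * real m)) * nu pq.Si * nu (adj pq.X)"
  have Fm_dims: "dim_row Fm = n" "dim_col Fm = n" unfolding Fm_def MQ GQ using nE by auto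
  have lim: "((\<lambda>k. scat P Q R S k $$ (i, l)) \<longlongrightarrow> Fm $$ (i, l)) (at_right 0)" if il: "i < n" "l < n" for i l
  proof (rule LIM_zero_cancel, rule Lim_null_comparison)
    show "((\<lambda>k. 2 * Cb * k) \<longlongrightarrow> 0) (at_right 0)"
      by (rule tendsto_eq_intros | simp)+
    have "eventually (\<lambda>k. k \<in> {0<..<\<delta>}) (at_right (0::real))" by (rule eventually_at_right_real[OF \<delta>pos])
    thus "\<forall>\<^sub>F k in at_right 0. norm (scat P Q R S k $$ (i, l) - Fm $$ (i, l)) \<le> 2 * Cb * k"
    proof (rule eventually_mono)
      fix k :: real assume "k \<in> {0<..<\<delta>}"
      hence k: "0 < k" "k < \<delta>" by auto
      let ?Xp = "pq.X * Wk k * pq.Si * adj pq.X"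
      have Xpd: "dim_row ?Xp = n" "dim_col ?Xp = n" using Wk_dims nE by auto
      have XpE: "Xmat P Q R S * Wk k * minv S * mat_adjoint (Xmat P Q R S) = ?Xp" unfolding XQ SiQ ..
      have "scat P Q R S k $$ (i, l) - Fm $$ (i, l) = - ((2 * \<i> * complex_of_real k) * ?Xp $$ (i,l))"
        using main[OF k] il Xpd Fm_dims unfolding XpE by simp
      hence "norm (scat P Q R S k $$ (i, l) - Fm $$ (i, l)) = 2 * k * norm (?Xp $$ (i,l))"
        using k by (simp add: norm_mult)
      also have "\<dots> \<le> 2 * k * nu ?Xp"
        using il Xpd by (intro mult_left_mono nu_entry) (use k in auto)
      also have "\<dots> \<le> 2 * k * Cb"
      proof (intro mult_left_mono)
        have "nu ?Xp \<le> nu (pq.X * Wk k * pq.Si) * nu (adj pq.X)" by (rule nu_mult) (simp add: Wk_dims)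
        also have "\<dots> \<le> (nu (pq.X * Wk k) * nu pq.Si) * nu (adj pq.X)"
          by (intro mult_right_mono nu_mult nu_nonneg) (simp add: Wk_dims)
        also have "\<dots> \<le> ((nu pq.X * nu (Wk k)) * nu pq.Si) * nu (adj pq.X)"
          by (intro mult_right_mono nu_mult nu_nonneg mult_nonneg_nonneg) (simp_all add: Wk_dims)
        also have "\<dots> \<le> ((nu pq.X * (real m * real m * (2 * real m))) * nu pq.Si) * nu (adj pq.X)"
          by (intro mult_right_mono mult_left_mono nuW[OF k] nu_nonneg mult_nonneg_nonneg)
        finally show "nu ?Xp \<le> Cb" unfolding Cb_def .
      qed (use k in auto)
      finally show "norm (scat P Q R S k $$ (i, l) - Fm $$ (i, l)) \<le> 2 * Cb * k" by (simp add: mult_ac)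
    qed
  qed
  show ?thesis
  proof (intro conjI)
    show "\<exists>\<delta>>0. \<forall>k::real. 0 < k \<and> k < \<delta> \<longrightarrow>
           invertible_mat (- A_PQRS P Q R S + (\<i> * complex_of_real k) \<cdot>\<^sub>m B_PQRS P Q R S)
         \<and> (\<forall>i<m. \<forall>l<m. summable (\<lambda>j. (((\<i> * complex_of_real k) ^ j)
                  \<cdot>\<^sub>m (minv S * mat_adjoint (Xmat P Q R S) * Xmat P Q R S) ^\<^sub>m j) $$ (i, l)))
         \<and> scat P Q R S k =
             - 1\<^sub>m n + 2 \<cdot>\<^sub>m (M_Q Q R * G_QR Q R * mat_adjoint (M_Q Q R))
             - (2 * \<i> * complex_of_real k) \<cdot>\<^sub>m
                 (Xmat P Q R S
                  * mat m m (\<lambda>(i, l). \<Sum>j. (((\<i> * complex_of_real k) ^ j)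
                      \<cdot>\<^sub>m (minv S * mat_adjoint (Xmat P Q R S) * Xmat P Q R S) ^\<^sub>m j) $$ (i, l))
                  * minv S * mat_adjoint (Xmat P Q R S))"
      using \<delta>pos main unfolding Fm_def Wk_def by blast
    show "\<forall>i<n. \<forall>l<n. ((\<lambda>k. scat P Q R S k $$ (i, l)) \<longlongrightarrow>
             (- 1\<^sub>m n + 2 \<cdot>\<^sub>m (M_Q Q R * G_QR Q R * mat_adjoint (M_Q Q R))) $$ (i, l)) (at_right 0)"
      using lim unfolding Fm_def by blast
  qed
qed

end
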